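(* Let $p,q\in\mathbb Z_{\ge2}$ be of different parity. Then $\zeta_2^\sharp(p,q)\in\mathbb Q[\{\zeta(j+1):j\in\mathbb N\}]$.
   Context: $\zeta_2^\sharp(s_1,s_2)=\sum_{m,n=1}^\infty n^{-s_1}(2m+n)^{-s_2}$; $\zeta$ is the Riemann zeta-function; $\mathbb N=\{1,2,\ldots\}$. *)

theory Defs
  imports "HOL-Analysis.Analysis"
begin

definition rzeta :: "nat \<Rightarrow> real" where
  "rzeta s = (\<Sum>n. 1 / (real (Suc n)) ^ s)"

definition zeta2sharp :: "nat \<Rightarrow> nat \<Rightarrow> real" where
  "zeta2sharp s1 s2 =
     infsum (\<lambda>(m, n). 1 / (real n ^ s1 * real (2 * m + n) ^ s2)) ({1..} \<times> {1..})"

inductive_set zeta_algebra :: "real set" where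
  rat: "of_rat r \<in> zeta_algebra"
| gen: "j \<ge> 1 \<Longrightarrow> rzeta (j + 1) \<in> zeta_algebra"
| add: "x \<in> zeta_algebra \<Longrightarrow> y \<in> zeta_algebra \<Longrightarrow> x + y \<in> zeta_algebra"
| mult: "x \<in> zeta_algebra \<Longrightarrow> y \<in> zeta_algebra \<Longrightarrow> x * y \<in> zeta_algebra"

end

theory Submission
  imports Defs
begin


lemma ZA_0: "0 \<in> zeta_algebra" using zeta_algebra.rat[of 0] by simp
lemma ZA_1: "1 \<in> zeta_algebra" using zeta_algebra.rat[of 1] by simp
lemma ZA_int: "real_of_int k \<in> zeta_algebra" using zeta_algebra.rat[of "of_int k"] by simp
lemma ZA_neg: "x \<in> zeta_algebra \<Longrightarrow> - x \<in> zeta_algebra"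
  using zeta_algebra.mult[OF zeta_algebra.rat[of "-1"]] by simp
lemma ZA_diff: "x \<in> zeta_algebra \<Longrightarrow> y \<in> zeta_algebra \<Longrightarrow> x - y \<in> zeta_algebra"
  using zeta_algebra.add[OF _ ZA_neg] by simp
lemma ZA_sum: "(\<And>i. i \<in> I \<Longrightarrow> f i \<in> zeta_algebra) \<Longrightarrow> sum f I \<in> zeta_algebra"
  by (induction I rule: infinite_finite_induct) (auto intro: ZA_0 zeta_algebra.add)
lemma ZA_pow2: "1 / 2 ^ k \<in> zeta_algebra"
  using zeta_algebra.rat[of "1 / 2 ^ k"] by (simp add: of_rat_divide of_rat_power)
lemma ZA_sign: "(-1) ^ k \<in> zeta_algebra"
  using zeta_algebra.rat[of "(-1) ^ k"] by (simp add: of_rat_power)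
lemma ZA_half: "x \<in> zeta_algebra \<Longrightarrow> x / 2 \<in> zeta_algebra"
  using zeta_algebra.mult[OF zeta_algebra.rat[of "1/2"]] by (simp add: of_rat_divide)
lemma ZA_div_pow2: "x \<in> zeta_algebra \<Longrightarrow> x / 2 ^ k \<in> zeta_algebra"
  using zeta_algebra.mult[OF ZA_pow2[of k]] by (simp add: field_simps)
lemma ZA_zeta: "s \<ge> 2 \<Longrightarrow> rzeta s \<in> zeta_algebra"
  using zeta_algebra.gen[of "s - 1"] by simp

lemma has_sum_sum_fin:
  fixes f :: "'i \<Rightarrow> 'a \<Rightarrow> real"
  assumes "finite I" "\<And>i. i \<in> I \<Longrightarrow> (f i has_sum v i) A"
  shows "((\<lambda>x. \<Sum>i\<in>I. f i x) has_sum (\<Sum>i\<in>I. v i)) A"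
  using assms by (induction I rule: finite_induct) (auto intro: has_sum_add)

lemma has_sum_diff':
  fixes f g :: "'a \<Rightarrow> real"
  assumes "(f has_sum a) A" "(g has_sum b) A"
  shows "((\<lambda>x. f x - g x) has_sum (a - b)) A"
proof -
  have "((\<lambda>x. - g x) has_sum (- b)) A" using has_sum_uminus[where f=g and a="-b" and A=A] assms(2) by simp
  from has_sum_add[OF assms(1) this] show ?thesis by simp
qed

lemma has_sum_product_nonneg:
  fixes f g :: "'a \<Rightarrow> real"
  assumes "(f has_sum a) A" "(g has_sum b) B" "\<And>x. x\<in>A \<Longrightarrow> f x \<ge> 0" "\<And>y. y \<in> B \<Longrightarrow> g y \<ge> 0"
  shows "((\<lambda>(x,y). f x * g y) has_sum (a * b)) (A \<times> B)"
proof -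
  have inner: "((\<lambda>y. (\<lambda>(x,y). f x * g y) (x,y)) has_sum f x * b) B" for x
    using has_sum_cmult_right[OF assms(2)] by simp
  have outer: "((\<lambda>x. f x * b) has_sum a * b) A"
    using has_sum_cmult_left[OF assms(1)] by simp
  have "(\<lambda>(x,y). f x * g y) summable_on Sigma A (\<lambda>_. B)"
    by (rule summable_on_SigmaI[OF inner]) (use outer has_sum_imp_summable assms in auto)
  then show ?thesis using has_sum_SigmaI[OF inner outer] by simp
qed

lemma zeta_has_sum: "s \<ge> 2 \<Longrightarrow> ((\<lambda>n::nat. 1 / real n ^ s) has_sum rzeta s) {1..}"
proof -
  assume s: "s \<ge> 2"
  have "summable (\<lambda>n. inverse (real n ^ s))" by (rule inverse_power_summable[OF s])
  hence "summable (\<lambda>n. 1 / real (Suc n) ^ s)"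
    by (subst summable_Suc_iff) (simp add: inverse_eq_divide)
  hence "(\<lambda>n. 1 / real (Suc n) ^ s) sums rzeta s" unfolding rzeta_def by (rule summable_sums)
  hence "((\<lambda>n. 1 / real (Suc n) ^ s) has_sum rzeta s) UNIV"
    by (rule sums_nonneg_imp_has_sum) simp
  moreover have "Suc ` UNIV = {1..}" using not0_implies_Suc by (auto simp: image_iff)
  ultimately show ?thesis using has_sum_reindex[of Suc UNIV "\<lambda>n::nat. 1 / real n ^ s"]
    by (simp add: o_def)
qed



lemma sign_div: "1 / ((-1::real)^s * x) = (-1)^s / x" by (cases "even s") auto

lemma zeta_int_has_sum:
  assumes s: "s \<ge> 2"
  shows "((\<lambda>n::int. 1 / of_int n ^ s) has_sum ((1 + (-1)^s) * rzeta s)) {n. n \<noteq> 0}"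
proof -
  have pos: "((\<lambda>n::int. 1 / of_int n ^ s) has_sum rzeta s) {n. n > 0}"
  proof -
    have "((\<lambda>n::nat. 1 / real n ^ s) has_sum rzeta s) {1..} = ((\<lambda>n::int. 1 / of_int n ^ s) has_sum rzeta s) {n. n > 0}"
      by (rule has_sum_reindex_bij_witness[where j = int and i = nat]) simp_all
    with zeta_has_sum[OF s] show ?thesis by simp
  qed
  have neg: "((\<lambda>n::int. 1 / of_int n ^ s) has_sum ((-1)^s * rzeta s)) {n. n < 0}"
  proof -
    have "((\<lambda>n::nat. (-1)^s * (1 / real n ^ s)) has_sum ((-1)^s * rzeta s)) {1..}"
      by (rule has_sum_cmult_right[OF zeta_has_sum[OF s]])
    moreover have "((\<lambda>n::nat. (-1)^s * (1 / real n ^ s)) has_sum ((-1)^s * rzeta s)) {1..} = ((\<lambda>n::int. 1 / of_int n ^ s) has_sum ((-1)^s * rzeta s)) {n. n < 0}"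
    proof (rule has_sum_reindex_bij_witness[where j = "\<lambda>n. - int n" and i = "\<lambda>n. nat (-n)"])
      fix a :: nat assume "a \<in> {1..}"
      have "real_of_int (- int a) ^ s = (-1)^s * real a ^ s"
        by (metis of_int_minus of_int_of_nat_eq power_minus)
      then show "1 / real_of_int (- int a) ^ s = (-1) ^ s * (1 / real a ^ s)"
        by (simp add: sign_div)
    qed simp_all
    ultimately show ?thesis by simp
  qed
  have "((\<lambda>n::int. 1 / of_int n ^ s) has_sum (rzeta s + (-1)^s * rzeta s)) ({n. n > 0} \<union> {n. n < 0})"
    by (rule has_sum_Un_disjoint[OF pos neg]) auto
  moreover have "{n::int. n > 0} \<union> {n. n < 0} = {n. n \<noteq> 0}" by auto
  ultimately show ?thesis by (simp add: algebra_simps)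
qed

lemma odd_ge1: "odd (n::nat) \<Longrightarrow> Suc 0 \<le> n" by (cases n) auto

definition Ev :: "nat set" where "Ev = {n. 1 \<le> n \<and> even n}"
definition Od :: "nat set" where "Od = {n. odd n}"

lemma even_has_sum: "s \<ge> 2 \<Longrightarrow> ((\<lambda>n::nat. 1 / real n ^ s) has_sum rzeta s / 2 ^ s) Ev"
proof -
  assume s: "s \<ge> 2"
  have "((\<lambda>n::nat. (1/2^s) * (1 / real n ^ s)) has_sum ((1/2^s) * rzeta s)) {1..}"
    by (rule has_sum_cmult_right[OF zeta_has_sum[OF s]])
  moreover have "((\<lambda>n::nat. (1/2^s) * (1 / real n ^ s)) has_sum ((1/2^s) * rzeta s)) {1..} = ((\<lambda>n::nat. 1 / real n ^ s) has_sum ((1/2^s) * rzeta s)) Ev"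
    by (rule has_sum_reindex_bij_witness[where j = "\<lambda>n. 2 * n" and i = "\<lambda>n. n div 2"])
       (auto simp: Ev_def power_mult_distrib)
  ultimately show ?thesis by simp
qed

lemma odd_has_sum: "s \<ge> 2 \<Longrightarrow> ((\<lambda>n::nat. 1 / real n ^ s) has_sum (rzeta s - rzeta s / 2 ^ s)) Od"
proof -
  assume s: "s \<ge> 2"
  have U: "{1..} = Ev \<union> Od" "Ev \<inter> Od = {}" by (auto simp: Ev_def Od_def odd_ge1)
  have sm: "(\<lambda>n::nat. 1 / real n ^ s) summable_on Od"
    by (rule summable_on_subset[OF has_sum_imp_summable[OF zeta_has_sum[OF s]]]) (auto simp: Od_def odd_ge1)
  have "rzeta s = infsum (\<lambda>n::nat. 1 / real n ^ s) Ev + infsum (\<lambda>n::nat. 1 / real n ^ s) Od"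
    using infsum_Un_disjoint[OF has_sum_imp_summable[OF even_has_sum[OF s]] sm U(2)]
      zeta_has_sum[OF s] U(1) by (simp add: has_sum_iff)
  with even_has_sum[OF s] sm show ?thesis
    by (simp add: has_sum_iff)
qed

definition Pset :: "(nat \<times> nat) set" where "Pset = {(n,k). 1 \<le> n \<and> 1 \<le> k \<and> even (n + k)}"

definition Pval :: "nat \<Rightarrow> nat \<Rightarrow> real" where
  "Pval p q = (rzeta p - rzeta p / 2^p) * (rzeta q - rzeta q / 2^q) + (rzeta p / 2^p) * (rzeta q / 2^q)"

lemma Pval_ZA: "p \<ge> 2 \<Longrightarrow> q \<ge> 2 \<Longrightarrow> Pval p q \<in> zeta_algebra"
  unfolding Pval_def
  by (intro zeta_algebra.add zeta_algebra.mult ZA_diff ZA_div_pow2 ZA_zeta) auto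

lemma P_has_sum:
  assumes "p \<ge> 2" "q \<ge> 2"
  shows "((\<lambda>(n,k). 1 / (real n ^ p * real k ^ q)) has_sum Pval p q) Pset"
proof -
  have a: "((\<lambda>(x,y). (1 / real x ^ p) * (1 / real y ^ q)) has_sum ((rzeta p - rzeta p / 2^p) * (rzeta q - rzeta q / 2^q))) (Od \<times> Od)"
    by (rule has_sum_product_nonneg[OF odd_has_sum odd_has_sum]) (use assms in auto)
  have b: "((\<lambda>(x,y). (1 / real x ^ p) * (1 / real y ^ q)) has_sum ((rzeta p / 2^p) * (rzeta q / 2^q))) (Ev \<times> Ev)"
    by (rule has_sum_product_nonneg[OF even_has_sum even_has_sum]) (use assms in auto)
  have "((\<lambda>(x,y). (1 / real x ^ p) * (1 / real y ^ q)) has_sum Pval p q) (Od \<times> Od \<union> Ev \<times> Ev)"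
    unfolding Pval_def by (rule has_sum_Un_disjoint[OF a b]) (auto simp: Od_def Ev_def)
  moreover have "Od \<times> Od \<union> Ev \<times> Ev = Pset"
  proof (rule set_eqI, clarify)
    fix n k :: nat
    show "((n,k) \<in> Od \<times> Od \<union> Ev \<times> Ev) = ((n,k) \<in> Pset)"
      unfolding Od_def Ev_def Pset_def by (cases "even n"; cases "even k") (auto simp: odd_ge1)
  qed
  ultimately show ?thesis by (simp add: case_prod_unfold)
qed



definition gP :: "nat \<Rightarrow> nat \<Rightarrow> nat \<times> nat \<Rightarrow> real" where
  "gP p q = (\<lambda>(n,k). 1 / (real n ^ p * real k ^ q))"

definition Q1 where "Q1 = {(n,k). (n,k) \<in> Pset \<and> n < k}"
definition Q2 where "Q2 = {(n,k). (n,k) \<in> Pset \<and> k < n}"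
definition Q3 where "Q3 = {(n,k). (n,k) \<in> Pset \<and> n = k}"

lemma Q1_reindex:
  "(gP p q has_sum S) Q1 \<longleftrightarrow> ((\<lambda>(m,n). 1 / (real n ^ p * real (2*m+n) ^ q)) has_sum S) ({1..}\<times>{1..})"
proof (rule sym, rule has_sum_reindex_bij_witness[where j = "\<lambda>(m,n). (n, 2*m+n)" and i = "\<lambda>(n,k). ((k-n) div 2, n)"])
  fix a assume "a \<in> Q1"
  then obtain n k where a: "a = (n,k)" "1 \<le> n" "n < k" "even (n+k)" by (auto simp: Q1_def Pset_def)
  then have "even (k - n)" by auto
  then show "(\<lambda>(m,n). (n, 2*m+n)) ((\<lambda>(n,k). ((k-n) div 2, n)) a) = a" using a by auto
  have "Suc 0 \<le> (k-n) div 2" using a \<open>even (k-n)\<close> by presburger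
  then show "(\<lambda>(n,k). ((k-n) div 2, n)) a \<in> {1..}\<times>{1..}" using a by auto
next
  fix b assume "b \<in> ({1..}\<times>{1..} :: (nat\<times>nat) set)"
  then obtain m n where b: "b = (m,n)" "1 \<le> m" "1 \<le> n" by auto
  show "(\<lambda>(n,k). ((k-n) div 2, n)) ((\<lambda>(m,n). (n, 2*m+n)) b) = b" using b by auto
  show "(\<lambda>(m,n). (n, 2*m+n)) b \<in> Q1" using b by (auto simp: Q1_def Pset_def)
  show "gP p q ((\<lambda>(m,n). (n, 2*m+n)) b) = (\<lambda>(m,n). 1 / (real n ^ p * real (2*m+n) ^ q)) b"
    using b by (simp add: gP_def)
qed simp

lemma Q2_reindex:
  "(gP p q has_sum S) Q2 \<longleftrightarrow> ((\<lambda>(m,n). 1 / (real n ^ q * real (2*m+n) ^ p)) has_sum S) ({1..}\<times>{1..})"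
proof (rule sym, rule has_sum_reindex_bij_witness[where j = "\<lambda>(m,n). (2*m+n, n)" and i = "\<lambda>(n,k). ((n-k) div 2, k)"])
  fix a assume "a \<in> Q2"
  then obtain n k where a: "a = (n,k)" "1 \<le> k" "k < n" "even (n+k)" by (auto simp: Q2_def Pset_def)
  then have "even (n - k)" by auto
  then show "(\<lambda>(m,n). (2*m+n, n)) ((\<lambda>(n,k). ((n-k) div 2, k)) a) = a" using a by auto
  have "Suc 0 \<le> (n-k) div 2" using a \<open>even (n-k)\<close> by presburger
  then show "(\<lambda>(n,k). ((n-k) div 2, k)) a \<in> {1..}\<times>{1..}" using a by auto
next
  fix b assume "b \<in> ({1..}\<times>{1..} :: (nat\<times>nat) set)"
  then obtain m n where b: "b = (m,n)" "1 \<le> m" "1 \<le> n" by auto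
  show "(\<lambda>(n,k). ((n-k) div 2, k)) ((\<lambda>(m,n). (2*m+n, n)) b) = b" using b by auto
  show "(\<lambda>(m,n). (2*m+n, n)) b \<in> Q2" using b by (auto simp: Q2_def Pset_def)
  show "gP p q ((\<lambda>(m,n). (2*m+n, n)) b) = (\<lambda>(m,n). 1 / (real n ^ q * real (2*m+n) ^ p)) b"
    using b by (simp add: gP_def mult.commute)
qed simp

lemma Q3_reindex:
  "(gP p q has_sum S) Q3 \<longleftrightarrow> ((\<lambda>n::nat. 1 / real n ^ (p+q)) has_sum S) {1..}"
proof (rule sym, rule has_sum_reindex_bij_witness[where j = "\<lambda>n. (n,n)" and i = fst])
  show "\<And>b. b \<in> {1::nat..} \<Longrightarrow> gP p q (b, b) = 1 / real b ^ (p + q)"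
    by (simp add: gP_def power_add)
qed (auto simp: Q3_def Pset_def)

lemma zsharp_has_sum:
  assumes "p \<ge> 2" "q \<ge> 2"
  shows "((\<lambda>(m,n). 1 / (real n ^ p * real (2*m+n) ^ q)) has_sum zeta2sharp p q) ({1..}\<times>{1..})"
    and "(gP p q has_sum zeta2sharp p q) Q1"
    and "(gP p q has_sum zeta2sharp q p) Q2"
    and "Pval p q = zeta2sharp p q + zeta2sharp q p + rzeta (p+q)"
proof -
  have P: "(gP p q has_sum Pval p q) Pset" using P_has_sum[OF assms] by (simp add: gP_def)
  have s1: "gP p q summable_on Q1" by (rule summable_on_subset[OF has_sum_imp_summable[OF P]]) (auto simp: Q1_def)
  have s2: "gP p q summable_on Q2" by (rule summable_on_subset[OF has_sum_imp_summable[OF P]]) (auto simp: Q2_def)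
  have h1: "((\<lambda>(m,n). 1 / (real n ^ p * real (2*m+n) ^ q)) has_sum infsum (gP p q) Q1) ({1..}\<times>{1..})"
    using Q1_reindex s1 by (simp add: summable_iff_has_sum_infsum)
  then have e1: "infsum (gP p q) Q1 = zeta2sharp p q" unfolding zeta2sharp_def by (simp add: has_sum_iff)
  then show "((\<lambda>(m,n). 1 / (real n ^ p * real (2*m+n) ^ q)) has_sum zeta2sharp p q) ({1..}\<times>{1..})"
    using h1 by simp
  show g1: "(gP p q has_sum zeta2sharp p q) Q1" using s1 e1 by (simp add: has_sum_iff)
  have h2: "((\<lambda>(m,n). 1 / (real n ^ q * real (2*m+n) ^ p)) has_sum infsum (gP p q) Q2) ({1..}\<times>{1..})"
    using Q2_reindex s2 by (simp add: summable_iff_has_sum_infsum)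
  then have e2: "infsum (gP p q) Q2 = zeta2sharp q p" unfolding zeta2sharp_def by (simp add: has_sum_iff)
  show g2: "(gP p q has_sum zeta2sharp q p) Q2" using s2 e2 by (simp add: has_sum_iff)
  have g3: "(gP p q has_sum rzeta (p+q)) Q3" using Q3_reindex zeta_has_sum[of "p+q"] assms by simp
  have "(gP p q has_sum (zeta2sharp p q + zeta2sharp q p + rzeta (p+q))) (Q1 \<union> Q2 \<union> Q3)"
    by (intro has_sum_Un_disjoint g1 g2 g3) (auto simp: Q1_def Q2_def Q3_def)
  moreover have "Q1 \<union> Q2 \<union> Q3 = Pset" by (auto simp: Q1_def Q2_def Q3_def)
  ultimately have "(gP p q has_sum (zeta2sharp p q + zeta2sharp q p + rzeta (p+q))) Pset" by simp
  then show "Pval p q = zeta2sharp p q + zeta2sharp q p + rzeta (p+q)"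
    using P has_sum_unique by blast
qed



definition TS :: "nat \<Rightarrow> int set" where "TS L = {n. n \<noteq> 0 \<and> n \<noteq> - int L}"
definition tf :: "nat \<Rightarrow> nat \<Rightarrow> nat \<Rightarrow> int \<Rightarrow> real" where
  "tf L a b n = 1 / (of_int n ^ a * of_int (n + int L) ^ b)"
definition T :: "nat \<Rightarrow> nat \<Rightarrow> nat \<Rightarrow> real" where "T L a b = infsum (tf L a b) (TS L)"

lemma bnd_pow:
  fixes x y :: real
  assumes "\<bar>x\<bar> \<ge> 1" "\<bar>y\<bar> \<ge> 1" "a + b \<ge> 2" "\<bar>x\<bar> \<le> \<bar>y\<bar>"
  shows "\<bar>1 / (x^a * y^b)\<bar> \<le> 1 / x^2 + 1 / y^2"
proof -
  have "\<bar>x\<bar>^2 \<le> \<bar>x\<bar>^(a+b)" by (rule power_increasing) (use assms in auto)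
  also have "\<dots> = \<bar>x\<bar>^a * \<bar>x\<bar>^b" by (simp add: power_add)
  also have "\<dots> \<le> \<bar>x\<bar>^a * \<bar>y\<bar>^b" by (intro mult_left_mono power_mono) (use assms in auto)
  finally have le: "x^2 \<le> \<bar>x^a * y^b\<bar>" by (simp add: abs_mult power_abs)
  have "x^2 > 0" using assms by auto
  have pos0: "0 < \<bar>x^a * y^b\<bar>" using le \<open>x^2 > 0\<close> by linarith
  have pos: "0 < \<bar>x^a * y^b\<bar> * x^2" using pos0 \<open>x^2 > 0\<close> by (rule mult_pos_pos)
  have "\<bar>1 / (x^a * y^b)\<bar> = 1 / \<bar>x^a * y^b\<bar>" by simp
  also have "\<dots> \<le> 1 / x^2" by (rule divide_left_mono) (use le pos in auto)
  also have "\<dots> \<le> 1 / x^2 + 1 / y^2" by simp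
  finally show ?thesis .
qed

lemma bnd_pow2:
  fixes x y :: real
  assumes "\<bar>x\<bar> \<ge> 1" "\<bar>y\<bar> \<ge> 1" "a + b \<ge> 2"
  shows "\<bar>1 / (x^a * y^b)\<bar> \<le> 1 / x^2 + 1 / y^2"
proof (cases "\<bar>x\<bar> \<le> \<bar>y\<bar>")
  case True then show ?thesis using bnd_pow assms by blast
next
  case False
  then have "\<bar>1 / (y^b * x^a)\<bar> \<le> 1 / y^2 + 1 / x^2" using bnd_pow[of y x b a] assms by auto
  then show ?thesis by (simp add: mult.commute add.commute)
qed

lemma shift_has_sum:
  assumes "s \<ge> 2"
  shows "((\<lambda>n::int. 1 / of_int (n + int L) ^ s) has_sum ((1 + (-1)^s) * rzeta s)) {n. n + int L \<noteq> 0}"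
proof -
  have "((\<lambda>n::int. 1 / of_int n ^ s) has_sum ((1 + (-1)^s) * rzeta s)) {n. n \<noteq> 0} =
        ((\<lambda>n::int. 1 / of_int (n + int L) ^ s) has_sum ((1 + (-1)^s) * rzeta s)) {n. n + int L \<noteq> 0}"
    by (rule has_sum_reindex_bij_witness[where j = "\<lambda>k. k - int L" and i = "\<lambda>n. n + int L"]) auto
  with zeta_int_has_sum[OF assms] show ?thesis by simp
qed

lemma T_summable:
  assumes "a + b \<ge> 2"
  shows "tf L a b summable_on TS L"
proof -
  have z1: "(\<lambda>n::int. 1 / (of_int n :: real) ^ 2) summable_on {n. n \<noteq> 0}"
    using has_sum_imp_summable[OF zeta_int_has_sum[of 2]] by simp
  have z2: "(\<lambda>n::int. 1 / (of_int (n + int L) :: real) ^ 2) summable_on {n. n + int L \<noteq> 0}"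
    using has_sum_imp_summable[OF shift_has_sum[of 2]] by simp
  have s1: "(\<lambda>n::int. 1 / (of_int n :: real) ^ 2) summable_on TS L"
    by (rule summable_on_subset[OF z1]) (auto simp: TS_def)
  have s2: "(\<lambda>n::int. 1 / (of_int (n + int L) :: real) ^ 2) summable_on TS L"
    by (rule summable_on_subset[OF z2]) (auto simp: TS_def)
  have s: "(\<lambda>n::int. 1 / (of_int n :: real) ^ 2 + 1 / (of_int (n + int L) :: real) ^ 2) summable_on TS L"
    by (rule summable_on_add[OF s1 s2])
  have "(\<lambda>n. norm (tf L a b n)) summable_on TS L"
  proof (rule summable_on_comparison_test[OF s])
    fix n assume n: "n \<in> TS L"
    show "0 \<le> norm (tf L a b n)" by simp
    have n0: "n \<noteq> 0" "n + int L \<noteq> 0" using n by (auto simp: TS_def)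
    have i1: "1 \<le> \<bar>n\<bar>" using n0(1) by arith
    have i2: "1 \<le> \<bar>n + int L\<bar>" using n0(2) by arith
    have "\<bar>real_of_int n\<bar> \<ge> 1" using i1 by (simp only: of_int_abs[symmetric] of_int_1_le_iff)
    moreover have "\<bar>real_of_int (n + int L)\<bar> \<ge> 1" using i2 by (simp only: of_int_abs[symmetric] of_int_1_le_iff)
    ultimately have "\<bar>real_of_int n\<bar> \<ge> 1 \<and> \<bar>real_of_int (n + int L)\<bar> \<ge> 1" by blast
    then have "\<bar>real_of_int n\<bar> \<ge> 1" "\<bar>real_of_int (n + int L)\<bar> \<ge> 1" by blast+
    then show "norm (tf L a b n) \<le> 1 / of_int n ^ 2 + 1 / of_int (n + int L) ^ 2"
      unfolding tf_def real_norm_def by (rule bnd_pow2) (use assms in auto)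
  qed
  then show ?thesis by (subst summable_on_iff_abs_summable_on_real) simp
qed

lemma rec_id:
  fixes x y L :: real
  assumes x: "x \<noteq> 0" and y: "x + L \<noteq> 0" and L: "L \<noteq> 0"
  shows "1 / (x ^ Suc a * (x + L) ^ Suc b) = (1 / (x ^ Suc a * (x + L) ^ b) - 1 / (x ^ a * (x + L) ^ Suc b)) / L"
proof -
  define X where "X = x ^ a" define Y where "Y = (x + L) ^ b"
  have X: "X \<noteq> 0" and Y: "Y \<noteq> 0" using x y by (auto simp: X_def Y_def)
  define D where "D = x * X * ((x + L) * Y)"
  have D: "D \<noteq> 0" using X Y x y by (simp add: D_def)
  have d1: "D = (x + L) * (x * X * Y)" by (simp add: D_def ac_simps)
  have d2: "D = x * (X * ((x + L) * Y))" by (simp add: D_def ac_simps)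
  have e1: "1 / (x * X * Y) = (x + L) / D" unfolding d1 using y by simp
  have e2: "1 / (X * ((x + L) * Y)) = x / D" unfolding d2 using x by simp
  have "(1 / (x * X * Y) - 1 / (X * ((x + L) * Y))) / L = ((x + L) / D - x / D) / L" by (simp add: e1 e2)
  also have "\<dots> = 1 / D" using L D by (simp add: field_simps)
  finally have "1 / (x * X * ((x + L) * Y)) = (1 / (x * X * Y) - 1 / (X * ((x + L) * Y))) / L"
    by (simp add: D_def)
  then show ?thesis by (simp add: X_def Y_def mult.assoc)
qed

lemma T_rec:
  assumes "a \<ge> 1" "b \<ge> 1" "a + b \<ge> 3" "L \<ge> 1"
  shows "T L a b = (T L a (b-1) - T L (a-1) b) / real L"
proof -
  obtain a' b' where ab: "a = Suc a'" "b = Suc b'" using assms by (metis Suc_le_D One_nat_def)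
  have pt: "tf L a b n = (tf L a (b-1) n - tf L (a-1) b n) / real L" if "n \<in> TS L" for n
  proof -
    have x: "real_of_int n \<noteq> 0" and y: "real_of_int n + real L \<noteq> 0" and L: "real L \<noteq> 0"
      using that assms by (auto simp: TS_def)
    show ?thesis unfolding tf_def ab
      using rec_id[OF x y L, of a' b'] by simp
  qed
  have h1: "(tf L a (b-1) has_sum T L a (b-1)) (TS L)" unfolding T_def
    by (rule has_sum_infsum[OF T_summable]) (use assms in auto)
  have h2: "(tf L (a-1) b has_sum T L (a-1) b) (TS L)" unfolding T_def
    by (rule has_sum_infsum[OF T_summable]) (use assms in auto)
  have "((\<lambda>n. (tf L a (b-1) n - tf L (a-1) b n) / real L) has_sum ((T L a (b-1) - T L (a-1) b) / real L)) (TS L)"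
    using has_sum_cmult_left[OF has_sum_diff'[OF h1 h2], of "1 / real L"] by simp
  then have "(tf L a b has_sum ((T L a (b-1) - T L (a-1) b) / real L)) (TS L)"
    by (rule has_sum_cong[THEN iffD1, rotated]) (use pt in auto)
  then show ?thesis unfolding T_def by (simp add: has_sum_iff)
qed

lemma has_sum_remove:
  fixes f :: "'a \<Rightarrow> real"
  assumes "(f has_sum S) A" "x \<in> A"
  shows "(f has_sum (S - f x)) (A - {x})"
proof -
  have sm: "f summable_on (A - {x})" by (rule summable_on_subset[OF has_sum_imp_summable[OF assms(1)]]) auto
  have "infsum f ((A - {x}) \<union> {x}) = infsum f (A - {x}) + infsum f {x}"
    by (rule infsum_Un_disjoint[OF sm]) auto
  moreover have "(A - {x}) \<union> {x} = A" using assms by auto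
  ultimately have "S = infsum f (A - {x}) + f x" using assms by (simp add: has_sum_iff)
  then show ?thesis using sm by (simp add: has_sum_iff)
qed

lemma T_a0:
  assumes "a \<ge> 2" "L \<ge> 1"
  shows "T L a 0 = (1 + (-1)^a) * rzeta a - (-1)^a / real L ^ a"
proof -
  have "((\<lambda>n::int. 1 / of_int n ^ a) has_sum ((1 + (-1)^a) * rzeta a - 1 / of_int (- int L) ^ a)) ({n. n \<noteq> 0} - {- int L})"
    by (rule has_sum_remove[OF zeta_int_has_sum[OF assms(1)]]) (use assms in auto)
  moreover have "{n::int. n \<noteq> 0} - {- int L} = TS L" by (auto simp: TS_def)
  moreover have "1 / real_of_int (- int L) ^ a = (-1)^a / real L ^ a"
  proof -
    have "real_of_int (- int L) ^ a = (-1)^a * real L ^ a"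
      by (metis of_int_minus of_int_of_nat_eq power_minus)
    then show ?thesis by (simp add: sign_div)
  qed
  moreover have "tf L a 0 = (\<lambda>n. 1 / real_of_int n ^ a)" by (simp add: tf_def fun_eq_iff)
  ultimately have "(tf L a 0 has_sum ((1 + (-1)^a) * rzeta a - (-1)^a / real L ^ a)) (TS L)"
    by simp
  then show ?thesis unfolding T_def by (simp add: has_sum_iff)
qed

lemma T_0b:
  assumes "b \<ge> 2" "L \<ge> 1"
  shows "T L 0 b = (1 + (-1)^b) * rzeta b - 1 / real L ^ b"
proof -
  have "((\<lambda>n::int. 1 / of_int n ^ b) has_sum ((1 + (-1)^b) * rzeta b - 1 / of_int (int L) ^ b)) ({n. n \<noteq> 0} - {int L})"
    by (rule has_sum_remove[OF zeta_int_has_sum[OF assms(1)]]) (use assms in auto)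
  moreover have "((\<lambda>n::int. 1 / of_int n ^ b) has_sum ((1 + (-1)^b) * rzeta b - 1 / real L ^ b)) ({n. n \<noteq> 0} - {int L})
     = (tf L 0 b has_sum ((1 + (-1)^b) * rzeta b - 1 / real L ^ b)) (TS L)"
    by (rule has_sum_reindex_bij_witness[where j = "\<lambda>k. k - int L" and i = "\<lambda>n. n + int L"])
       (auto simp: TS_def tf_def)
  ultimately show ?thesis unfolding T_def by (simp add: has_sum_iff)
qed



lemma tele_shift:
  fixes g :: "nat \<Rightarrow> real"
  assumes "g \<longlonglongrightarrow> 0"
  shows "(\<lambda>n. g n - g (n + L)) sums (\<Sum>i<L. g i)"
proof (induction L)
  case 0 then show ?case by simp
next
  case (Suc L)
  have "(\<lambda>n. g (n + L)) \<longlonglongrightarrow> 0" using LIMSEQ_ignore_initial_segment[OF assms, of L] .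
  from telescope_sums'[OF this] have "(\<lambda>n. g (n + L) - g (Suc n + L)) sums g L" by simp
  from sums_add[OF Suc this] show ?case by simp
qed

definition H :: "nat \<Rightarrow> real" where "H L = (\<Sum>i<L. 1 / real (Suc i))"

lemma pf1: "x > 0 \<Longrightarrow> l > 0 \<Longrightarrow> (1 / x - 1 / (x + l)) / l = 1 / (x * (x + l))" for x l :: real
proof -
  assume a: "x > 0" "l > 0"
  have "1 / x - 1 / (x + l) = l / (x * (x + l))" using a by (simp add: field_simps)
  then show ?thesis using a by simp
qed

lemma pf2: "x > 0 \<Longrightarrow> y > 0 \<Longrightarrow> 1 / ((- x) * y) = - (1 / (x + y)) * (1 / x + 1 / y)" for x y :: real
  by (simp add: field_simps)

lemma pos_sums:
  assumes "L \<ge> 1"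
  shows "(\<lambda>n::nat. 1 / (real (Suc n) * real (Suc n + L))) sums (H L / real L)"
proof -
  have g: "(\<lambda>n. 1 / real (Suc n)) \<longlonglongrightarrow> 0"
    using LIMSEQ_inverse_real_of_nat by (simp add: inverse_eq_divide)
  have "(\<lambda>n. (1 / real (Suc n) - 1 / real (Suc (n + L))) / real L) sums (H L / real L)"
    unfolding H_def by (rule sums_divide[OF tele_shift[OF g]])
  moreover have "(1 / real (Suc n) - 1 / real (Suc (n + L))) / real L = 1 / (real (Suc n) * real (Suc n + L))" for n
    using pf1[of "real (Suc n)" "real L"] assms by (simp add: add.commute add.left_commute)
  ultimately show ?thesis by simp
qed

lemma pos_part:
  assumes "L \<ge> 1"
  shows "(tf L 1 1 has_sum (H L / real L)) {n. n > 0}"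
proof -
  have "((\<lambda>n::nat. 1 / (real (Suc n) * real (Suc n + L))) has_sum (H L / real L)) UNIV"
    by (rule sums_nonneg_imp_has_sum[OF pos_sums[OF assms]]) simp
  moreover have "((\<lambda>n::nat. 1 / (real (Suc n) * real (Suc n + L))) has_sum (H L / real L)) UNIV =
      (tf L 1 1 has_sum (H L / real L)) {n. n > 0}"
    by (rule has_sum_reindex_bij_witness[where j = "\<lambda>k. int (Suc k)" and i = "\<lambda>n. nat (n - 1)"])
       (auto simp: tf_def)
  ultimately show ?thesis by simp
qed

lemma neg_part:
  assumes "L \<ge> 1"
  shows "(tf L 1 1 has_sum (H L / real L)) {n. n < - int L}"
proof -
  have "((\<lambda>n::nat. 1 / (real (Suc n) * real (Suc n + L))) has_sum (H L / real L)) UNIV"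
    by (rule sums_nonneg_imp_has_sum[OF pos_sums[OF assms]]) simp
  moreover have "((\<lambda>n::nat. 1 / (real (Suc n) * real (Suc n + L))) has_sum (H L / real L)) UNIV =
      (tf L 1 1 has_sum (H L / real L)) {n. n < - int L}"
  proof (rule has_sum_reindex_bij_witness[where j = "\<lambda>k. - int (Suc k + L)" and i = "\<lambda>n. nat (- n - int L - 1)"])
    fix k :: nat
    have "tf L 1 1 (- int (Suc k + L)) = 1 / ((- real (Suc k + L)) * (- real (Suc k)))"
      by (simp add: tf_def)
    also have "\<dots> = 1 / (real (Suc k) * real (Suc k + L))" by (simp only: minus_mult_minus mult.commute)
    finally show "tf L 1 1 (- int (Suc k + L)) = 1 / (real (Suc k) * real (Suc k + L))" .
  qed auto
  ultimately show ?thesis by simp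
qed

lemma mid_part:
  assumes "L = Suc M"
  shows "(tf L 1 1 has_sum (- 2 * H M / real L)) {n. - int L < n \<and> n < 0}"
proof -
  have img: "{n. - int L < n \<and> n < 0} = (\<lambda>r. - int (Suc r)) ` {..<M}"
  proof (rule set_eqI, rule iffI)
    fix n assume "n \<in> {n. - int L < n \<and> n < 0}"
    then have "n = - int (Suc (nat (- n - 1)))" "nat (- n - 1) < M" using assms by auto
    then show "n \<in> (\<lambda>r. - int (Suc r)) ` {..<M}" by blast
  qed (use assms in auto)
  have inj: "inj_on (\<lambda>r. - int (Suc r)) {..<M}" by (auto simp: inj_on_def)
  have pt: "tf L 1 1 (- int (Suc r)) = - (1 / real L) * (1 / real (Suc r) + 1 / (real M - real r))" if "r < M" for r
  proof -
    have e: "real_of_int (- int (Suc r) + int L) = real M - real r" using assms by simp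
    have y: "real M - real r > 0" using that by simp
    have x: "real (Suc r) > 0" by simp
    have "tf L 1 1 (- int (Suc r)) = 1 / ((- real (Suc r)) * (real M - real r))"
      unfolding tf_def using e by simp
    also have "\<dots> = - (1 / (real (Suc r) + (real M - real r))) * (1 / real (Suc r) + 1 / (real M - real r))"
      by (rule pf2[OF x y])
    also have "real (Suc r) + (real M - real r) = real L" using assms by simp
    finally show ?thesis .
  qed
  have reflH: "(\<Sum>r<M. 1 / (real M - real r)) = H M"
  proof -
    have "(\<Sum>r<M. 1 / (real M - real r)) = (\<Sum>r<M. 1 / real (Suc (M - Suc r)))"
      by (rule sum.cong) (auto simp: of_nat_diff)
    also have "\<dots> = H M" unfolding H_def by (rule sum.nat_diff_reindex[where g = "\<lambda>i. 1 / real (Suc i)"])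
    finally show ?thesis .
  qed
  have "sum (tf L 1 1) {n. - int L < n \<and> n < 0} = (\<Sum>r<M. tf L 1 1 (- int (Suc r)))"
    by (rule sum.reindex_cong[OF inj img]) simp
  also have "\<dots> = (\<Sum>r<M. - (1 / real L) * (1 / real (Suc r) + 1 / (real M - real r)))"
    by (rule sum.cong[OF refl], rule pt) simp
  also have "\<dots> = - (1 / real L) * ((\<Sum>r<M. 1 / real (Suc r)) + (\<Sum>r<M. 1 / (real M - real r)))"
    by (simp only: sum_distrib_left[symmetric] sum.distrib)
  also have "\<dots> = - (1 / real L) * (H M + H M)"
    by (simp only: reflH H_def)
  also have "\<dots> = - 2 * H M / real L" by simp
  finally show ?thesis by (intro has_sum_finiteI) (auto simp: img)
qed

lemma T_11:
  assumes "L \<ge> 1"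
  shows "T L 1 1 = 2 / real L ^ 2"
proof -
  obtain M where M: "L = Suc M" using assms by (cases L) auto
  have "(tf L 1 1 has_sum (H L / real L + - 2 * H M / real L + H L / real L))
          ({n. n > 0} \<union> {n. - int L < n \<and> n < 0} \<union> {n. n < - int L})"
    by (intro has_sum_Un_disjoint pos_part neg_part mid_part[OF M]) (use assms in auto)
  moreover have "{n. n > 0} \<union> {n. - int L < n \<and> n < 0} \<union> {n. n < - int L} = TS L"
    by (auto simp: TS_def)
  moreover have "H L / real L + - 2 * H M / real L + H L / real L = 2 / real L ^ 2"
  proof -
    have "H L = H M + 1 / real L" unfolding H_def M by simp
    then show ?thesis using assms by (simp add: field_simps power2_eq_square)
  qed
  ultimately show ?thesis unfolding T_def by (simp add: has_sum_iff)
qed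



lemma sum_two:
  fixes X Y :: real and d :: "nat \<Rightarrow> real"
  assumes "a \<noteq> 0"
  shows "(\<Sum>i\<le>a. ((if i = a then X else 0) + (if i = 0 then Y else 0)) / d i) = X / d a + Y / d 0"
proof -
  have "(\<Sum>i\<le>a. ((if i = a then X else 0) + (if i = 0 then Y else 0)) / d i)
      = (\<Sum>i\<le>a. (if i = a then X / d a else 0) + (if i = 0 then Y / d 0 else 0))"
    by (rule sum.cong) (auto simp: add_divide_distrib)
  also have "\<dots> = (\<Sum>i\<le>a. (if i = a then X / d a else 0)) + (\<Sum>i\<le>a. (if i = 0 then Y / d 0 else 0))"
    by (rule sum.distrib)
  also have "\<dots> = X / d a + Y / d 0" by simp
  finally show ?thesis .
qed

lemma T_form:
  "2 \<le> a + b \<Longrightarrow> \<exists>c. (\<forall>i. c i \<in> zeta_algebra) \<and> (\<forall>i. max a b < i \<longrightarrow> c i = 0) \<and>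
     (\<forall>L\<ge>1. T L a b = (\<Sum>i\<le>a+b. c i / real L ^ (a+b-i)))"
proof (induction "a+b" arbitrary: a b rule: less_induct)
  case less
  show ?case
  proof (cases "b = 0")
    case True
    then have a2: "a \<ge> 2" using less by simp
    define c where "c i = (if i = a then (1 + (-1)^a) * rzeta a else 0) + (if i = 0 then - ((-1)^a) else 0)" for i
    show ?thesis
    proof (intro exI[of _ c] conjI allI impI)
      fix i show "c i \<in> zeta_algebra" unfolding c_def
        by (intro zeta_algebra.add) (auto intro!: zeta_algebra.mult zeta_algebra.add ZA_1 ZA_sign ZA_zeta ZA_neg ZA_0 a2)
    next
      fix i assume "max a b < i" then show "c i = 0" using True by (simp add: c_def)
    next
      fix L :: nat assume L: "L \<ge> 1"
      have "(\<Sum>i\<le>a+b. c i / real L ^ (a+b-i)) = (1 + (-1)^a) * rzeta a / real L ^ (a - a) + - ((-1)^a) / real L ^ (a - 0)"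
        unfolding c_def True using sum_two[of a "(1 + (-1)^a) * rzeta a" "- ((-1)^a)" "\<lambda>i. real L ^ (a - i)"] a2 by simp
      also have "\<dots> = T L a b" using T_a0[OF a2 L] True by simp
      finally show "T L a b = (\<Sum>i\<le>a+b. c i / real L ^ (a+b-i))" ..
    qed
  next
    case b0: False
    show ?thesis
    proof (cases "a = 0")
      case True
      then have b2: "b \<ge> 2" using less by simp
      define c where "c i = (if i = b then (1 + (-1)^b) * rzeta b else 0) + (if i = 0 then - 1 else 0)" for i
      show ?thesis
      proof (intro exI[of _ c] conjI allI impI)
        fix i show "c i \<in> zeta_algebra" unfolding c_def
          by (intro zeta_algebra.add) (auto intro!: zeta_algebra.mult zeta_algebra.add ZA_1 ZA_sign ZA_zeta ZA_neg ZA_0 b2)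
      next
        fix i assume "max a b < i" then show "c i = 0" using True by (simp add: c_def)
      next
        fix L :: nat assume L: "L \<ge> 1"
        have "(\<Sum>i\<le>a+b. c i / real L ^ (a+b-i)) = (1 + (-1)^b) * rzeta b / real L ^ (b - b) + - 1 / real L ^ (b - 0)"
          unfolding c_def True using sum_two[of b "(1 + (-1)^b) * rzeta b" "- 1" "\<lambda>i. real L ^ (b - i)"] b2 by simp
        also have "\<dots> = T L a b" using T_0b[OF b2 L] True by simp
        finally show "T L a b = (\<Sum>i\<le>a+b. c i / real L ^ (a+b-i))" ..
      qed
    next
      case a0: False
      show ?thesis
      proof (cases "a + b = 2")
        case True
        then have ab: "a = 1" "b = 1" using a0 b0 by auto
        define c where "c i = (if i = 0 then 2 else 0 :: real)" for i :: nat
        show ?thesis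
        proof (intro exI[of _ c] conjI allI impI)
          fix i show "c i \<in> zeta_algebra" unfolding c_def using ZA_int[of 2] ZA_0 by auto
        next
          fix i assume "max a b < i" then show "c i = 0" by (simp add: c_def)
        next
          fix L :: nat assume L: "L \<ge> 1"
          have "(\<Sum>i\<le>a+b. c i / real L ^ (a+b-i)) = 2 / real L ^ 2"
            unfolding ab c_def by (simp add: atMost_Suc power2_eq_square)
          then show "T L a b = (\<Sum>i\<le>a+b. c i / real L ^ (a+b-i))" using T_11[OF L] ab by simp
        qed
      next
        case False
        then have s3: "a + b \<ge> 3" using less by simp
        have e1: "\<exists>c. (\<forall>i. c i \<in> zeta_algebra) \<and> (\<forall>i. max a (b-1) < i \<longrightarrow> c i = 0) \<and>
          (\<forall>L\<ge>1. T L a (b-1) = (\<Sum>i\<le>a+(b-1). c i / real L ^ (a+(b-1)-i)))"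
          by (rule less(1)) (use b0 s3 in auto)
        then obtain c1 where c1: "\<forall>i. c1 i \<in> zeta_algebra" "\<forall>i. max a (b-1) < i \<longrightarrow> c1 i = 0"
          "\<forall>L\<ge>1. T L a (b-1) = (\<Sum>i\<le>a+(b-1). c1 i / real L ^ (a+(b-1)-i))"
          by blast
        have e2: "\<exists>c. (\<forall>i. c i \<in> zeta_algebra) \<and> (\<forall>i. max (a-1) b < i \<longrightarrow> c i = 0) \<and>
          (\<forall>L\<ge>1. T L (a-1) b = (\<Sum>i\<le>(a-1)+b. c i / real L ^ ((a-1)+b-i)))"
          by (rule less(1)) (use a0 s3 in auto)
        then obtain c2 where c2: "\<forall>i. c2 i \<in> zeta_algebra" "\<forall>i. max (a-1) b < i \<longrightarrow> c2 i = 0"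
          "\<forall>L\<ge>1. T L (a-1) b = (\<Sum>i\<le>(a-1)+b. c2 i / real L ^ ((a-1)+b-i))"
          by blast
        obtain s' where s': "a + b = Suc s'" "a + (b-1) = s'" "(a-1) + b = s'" using a0 b0 by (cases "a+b") auto
        define c where "c i = c1 i - c2 i" for i
        show ?thesis
        proof (intro exI[of _ c] conjI allI impI)
          fix i show "c i \<in> zeta_algebra" unfolding c_def using c1(1) c2(1) by (simp add: ZA_diff)
        next
          fix i assume mi: "max a b < i"
          have "c1 i = 0" using c1(2) mi by auto
          moreover have "c2 i = 0" using c2(2) mi by auto
          ultimately show "c i = 0" by (simp add: c_def)
        next
          fix L :: nat assume L: "L \<ge> 1"
          have z: "c (Suc s') = 0" using c1(2) c2(2) s' a0 b0 by (simp add: c_def)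
          have "(\<Sum>i\<le>a+b. c i / real L ^ (a+b-i)) = (\<Sum>i\<le>s'. c i / real L ^ (Suc s'-i))"
            unfolding s'(1) using z by (simp add: atMost_Suc)
          also have "\<dots> = (\<Sum>i\<le>s'. (c1 i / real L ^ (s'-i) - c2 i / real L ^ (s'-i)) / real L)"
          proof (rule sum.cong[OF refl])
            fix i assume "i \<in> {..s'}"
            then have "Suc s' - i = Suc (s' - i)" by auto
            then show "c i / real L ^ (Suc s' - i) = (c1 i / real L ^ (s'-i) - c2 i / real L ^ (s'-i)) / real L"
              by (simp add: c_def diff_divide_distrib mult.commute)
          qed
          also have "\<dots> = (T L a (b-1) - T L (a-1) b) / real L"
            using c1(3) c2(3) L s' by (simp add: sum_divide_distrib[symmetric] sum_subtractf)
          also have "\<dots> = T L a b" using T_rec[of a b L] a0 b0 s3 L by simp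
          finally show "T L a b = (\<Sum>i\<le>a+b. c i / real L ^ (a+b-i))" ..
        qed
      qed
    qed
  qed
qed



lemma R1_has_sum:
  assumes "p \<ge> 2" "q \<ge> 2"
  shows "((\<lambda>(m,n). tf (2*m) p q n) has_sum zeta2sharp p q) {(m,n). 1 \<le> m \<and> n > 0}"
proof -
  have "((\<lambda>(m,n). 1 / (real n ^ p * real (2*m+n) ^ q)) has_sum zeta2sharp p q) ({1..}\<times>{1..}) =
        ((\<lambda>(m,n). tf (2*m) p q n) has_sum zeta2sharp p q) {(m,n). 1 \<le> m \<and> n > 0}"
    by (rule has_sum_reindex_bij_witness[where j = "\<lambda>(m,n). (m, int n)" and i = "\<lambda>(m,n). (m, nat n)"])
       (auto simp: tf_def add.commute)
  with zsharp_has_sum(1)[OF assms] show ?thesis by simp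
qed

lemma R3_has_sum:
  assumes "p \<ge> 2" "q \<ge> 2" "odd (p + q)"
  shows "((\<lambda>(m,n). tf (2*m) p q n) has_sum (- zeta2sharp q p)) {(m,n). 1 \<le> m \<and> n < - int (2*m)}"
proof -
  have "((\<lambda>(m,n). - (1 / (real n ^ q * real (2*m+n) ^ p))) has_sum (- zeta2sharp q p)) ({1..}\<times>{1..})"
    using zsharp_has_sum(1)[of q p] assms has_sum_uminus[where f = "\<lambda>(m,n). 1 / (real n ^ q * real (2*m+n) ^ p)"]
    by (simp add: case_prod_unfold)
  moreover have "((\<lambda>(m,n). - (1 / (real n ^ q * real (2*m+n) ^ p))) has_sum (- zeta2sharp q p)) ({1..}\<times>{1..}) =
        ((\<lambda>(m,n). tf (2*m) p q n) has_sum (- zeta2sharp q p)) {(m,n). 1 \<le> m \<and> n < - int (2*m)}"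
  proof (rule has_sum_reindex_bij_witness[where j = "\<lambda>(m,k). (m, - int (k + 2*m))" and i = "\<lambda>(m,n). (m, nat (- n - int (2*m)))"])
    fix a :: "nat \<times> nat" assume "a \<in> {1..}\<times>{1..}"
    obtain m k where a: "a = (m,k)" by (cases a)
    have i1: "- int (k + 2*m) = - int (2*m+k)" by simp
    have i2: "- int (k + 2*m) + int (2*m) = - int k" by simp
    have neg_pow: "real_of_int (- int x) ^ r = (-1)^r * real x ^ r" for x r
      by (metis of_int_minus of_int_of_nat_eq power_minus)
    have e1: "real_of_int (- int (k + 2*m)) ^ p = (-1)^p * real (2*m+k) ^ p"
      unfolding i1 by (rule neg_pow)
    have e2: "real_of_int (- int (k + 2*m) + int (2*m)) ^ q = (-1)^q * real k ^ q"
      unfolding i2 by (rule neg_pow)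
    have "tf (2*m) p q (- int (k + 2*m)) = 1 / (((-1)^p * (-1)^q) * (real (2*m+k) ^ p * real k ^ q))"
      unfolding tf_def e1 e2 by (simp add: ac_simps)
    also have "(-1::real)^p * (-1)^q = -1" using assms(3) by (simp add: power_add[symmetric])
    finally show "(\<lambda>(m,n). tf (2*m) p q n) ((\<lambda>(m,k). (m, - int (k + 2*m))) a) = (\<lambda>(m,n). - (1 / (real n ^ q * real (2*m+n) ^ p))) a"
      unfolding a by (simp add: mult.commute)
  next
    fix a :: "nat \<times> nat" assume "a \<in> {1..}\<times>{1..}"
    then obtain m k where a: "a = (m,k)" "1 \<le> m" "1 \<le> k" by auto
    show "(\<lambda>(m,n). (m, nat (- n - int (2*m)))) ((\<lambda>(m,k). (m, - int (k + 2*m))) a) = a"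
      using a by simp
    show "(\<lambda>(m,k). (m, - int (k + 2*m))) a \<in> {(m,n). 1 \<le> m \<and> n < - int (2*m)}"
      using a by simp
  next
    fix b :: "nat \<times> int" assume "b \<in> {(m,n). 1 \<le> m \<and> n < - int (2*m)}"
    then obtain m n where b: "b = (m,n)" "1 \<le> m" "n < - int (2*m)" by auto
    have e: "int (nat (- n - int (2*m))) = - n - int (2*m)" using b by simp
    show "(\<lambda>(m,k). (m, - int (k + 2*m))) ((\<lambda>(m,n). (m, nat (- n - int (2*m)))) b) = b"
      using b e by simp
    show "(\<lambda>(m,n). (m, nat (- n - int (2*m)))) b \<in> {1..}\<times>{1..}"
      using b by simp
  qed simp
  ultimately show ?thesis by simp
qed

lemma R2_has_sum:
  assumes "p \<ge> 2" "q \<ge> 2"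
  shows "((\<lambda>(m,n). tf (2*m) p q n) has_sum ((-1)^p * Pval p q)) {(m,n). 1 \<le> m \<and> - int (2*m) < n \<and> n < 0}"
proof -
  have "((\<lambda>x. (-1)^p * (\<lambda>(n,k). 1 / (real n ^ p * real k ^ q)) x) has_sum ((-1)^p * Pval p q)) Pset"
    by (rule has_sum_cmult_right[OF P_has_sum[OF assms]])
  moreover have "((\<lambda>x. (-1)^p * (\<lambda>(n,k). 1 / (real n ^ p * real k ^ q)) x) has_sum ((-1)^p * Pval p q)) Pset =
        ((\<lambda>(m,n). tf (2*m) p q n) has_sum ((-1)^p * Pval p q)) {(m,n). 1 \<le> m \<and> - int (2*m) < n \<and> n < 0}"
  proof (rule has_sum_reindex_bij_witness[where j = "\<lambda>(r,k). ((r+k) div 2, - int r)" and i = "\<lambda>(m,n). (nat (- n), nat (n + int (2*m)))"])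
    fix a assume "a \<in> Pset"
    then obtain r k where a: "a = (r,k)" "1 \<le> r" "1 \<le> k" "even (r+k)" by (auto simp: Pset_def)
    have m2: "2 * ((r+k) div 2) = r + k" using a(4) by simp
    have m2i: "int (2 * ((r+k) div 2)) = int r + int k" using m2 by (metis of_nat_add)
    have m2j: "2 * int ((r+k) div 2) = int r + int k" using m2i by simp
    show "(\<lambda>(m,n). (nat (- n), nat (n + int (2*m)))) ((\<lambda>(r,k). ((r+k) div 2, - int r)) a) = a"
      using a m2j by simp
    have h1: "Suc 0 \<le> (r+k) div 2" using m2 a by linarith
    show "(\<lambda>(r,k). ((r+k) div 2, - int r)) a \<in> {(m,n). 1 \<le> m \<and> - int (2*m) < n \<and> n < 0}"
      using a m2j h1 by simp
    have neg_pow: "real_of_int (- int x) ^ s = (-1)^s * real x ^ s" for x s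
      by (metis of_int_minus of_int_of_nat_eq power_minus)
    have e2: "- int r + int (2 * ((r+k) div 2)) = int k" using m2i by simp
    have "tf (2 * ((r+k) div 2)) p q (- int r) = 1 / ((-1)^p * real r ^ p * real k ^ q)"
      unfolding tf_def e2 neg_pow by simp
    also have "\<dots> = (-1)^p * (1 / (real r ^ p * real k ^ q))"
      using sign_div[of p "real r ^ p * real k ^ q"] by (simp add: mult.assoc)
    finally show "(\<lambda>(m,n). tf (2*m) p q n) ((\<lambda>(r,k). ((r+k) div 2, - int r)) a) = (-1)^p * (\<lambda>(n,k). 1 / (real n ^ p * real k ^ q)) a"
      using a by simp
  next
    fix b assume "b \<in> {(m,n). 1 \<le> m \<and> - int (2*m) < n \<and> n < (0::int)}"
    then obtain m n where b: "b = (m,n)" "1 \<le> m" "- int (2*m) < n" "n < 0" by auto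
    have e1: "int (nat (- n)) = - n" using b by simp
    have e2: "int (nat (n + int (2*m))) = n + int (2*m)" using b by simp
    have s: "nat (- n) + nat (n + int (2*m)) = 2 * m" using e1 e2 by linarith
    show "(\<lambda>(r,k). ((r+k) div 2, - int r)) ((\<lambda>(m,n). (nat (- n), nat (n + int (2*m)))) b) = b"
      using b e1 s by simp
    have g1: "1 \<le> nat (-n)" using b by simp
    have g2: "1 \<le> nat (n + int (2*m))" using b by simp
    have ev: "even (nat (-n) + nat (n + int (2*m)))" using s by simp
    show "(\<lambda>(m,n). (nat (- n), nat (n + int (2*m)))) b \<in> Pset"
      unfolding Pset_def b(1) using g1 g2 ev by (simp only: mem_Collect_eq case_prod_conv)
  qed simp
  ultimately show ?thesis by simp
qed



lemma U_value:
  assumes p: "p \<ge> 2" and q: "q \<ge> 2" and o: "odd (p + q)"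
  shows "((\<lambda>m. T (2*m) p q) has_sum (zeta2sharp p q + (-1)^p * Pval p q + - zeta2sharp q p)) {1..}"
proof -
  let ?f = "\<lambda>(m,n). tf (2*m) p q n"
  have "(?f has_sum (zeta2sharp p q + (-1)^p * Pval p q + - zeta2sharp q p))
     ({(m,n). 1 \<le> m \<and> n > 0} \<union> {(m,n). 1 \<le> m \<and> - int (2*m) < n \<and> n < 0} \<union> {(m,n). 1 \<le> m \<and> n < - int (2*m)})"
    by (intro has_sum_Un_disjoint R1_has_sum R2_has_sum R3_has_sum p q o) auto
  moreover have "{(m,n). 1 \<le> m \<and> n > 0} \<union> {(m,n). 1 \<le> m \<and> - int (2*m) < n \<and> n < 0} \<union> {(m,n). 1 \<le> m \<and> n < - int (2*m)}
      = Sigma {1..} (\<lambda>m. TS (2*m))"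
    by (auto simp: TS_def)
  ultimately have S: "(?f has_sum (zeta2sharp p q + (-1)^p * Pval p q + - zeta2sharp q p)) (Sigma {1..} (\<lambda>m. TS (2*m)))"
    by simp
  show ?thesis
  proof (rule has_sum_Sigma'[OF S])
    fix m :: nat assume "m \<in> {1..}"
    show "((\<lambda>n. ?f (m,n)) has_sum T (2*m) p q) (TS (2*m))"
      unfolding T_def using T_summable[of p q "2*m"] p by (simp add: summable_iff_has_sum_infsum)
  qed
qed

lemma U_ZA:
  assumes p: "p \<ge> 2" and q: "q \<ge> 2"
  shows "\<exists>v. v \<in> zeta_algebra \<and> ((\<lambda>m. T (2*m) p q) has_sum v) {1..}"
proof -
  obtain c where c: "\<forall>i. c i \<in> zeta_algebra" "\<forall>i. max p q < i \<longrightarrow> c i = 0"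
    "\<forall>L\<ge>1. T L p q = (\<Sum>i\<le>p+q. c i / real L ^ (p+q-i))"
    using T_form[of p q] p by auto
  define v where "v i = c i * (rzeta (p+q-i) / 2 ^ (p+q-i))" for i
  have hs: "((\<lambda>m::nat. c i / real (2*m) ^ (p+q-i)) has_sum v i) {1..}" and vz: "v i \<in> zeta_algebra" for i
  proof -
    have "((\<lambda>m::nat. c i / real (2*m) ^ (p+q-i)) has_sum v i) {1..} \<and> v i \<in> zeta_algebra"
    proof (cases "max p q < i")
      case True
      then show ?thesis using c(2) ZA_0 by (simp add: v_def)
    next
      case False
      then have k: "p + q - i \<ge> 2" using p q by auto
      have "((\<lambda>m::nat. (c i / 2 ^ (p+q-i)) * (1 / real m ^ (p+q-i))) has_sum ((c i / 2 ^ (p+q-i)) * rzeta (p+q-i))) {1..}"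
        by (rule has_sum_cmult_right[OF zeta_has_sum[OF k]])
      moreover have "(c i / 2 ^ (p+q-i)) * (1 / real m ^ (p+q-i)) = c i / real (2*m) ^ (p+q-i)" for m
        by (simp add: power_mult_distrib)
      moreover have "(c i / 2 ^ (p+q-i)) * rzeta (p+q-i) = v i" by (simp add: v_def)
      moreover have "v i \<in> zeta_algebra" unfolding v_def
        by (intro zeta_algebra.mult c(1)[rule_format] ZA_div_pow2 ZA_zeta k)
      ultimately show ?thesis by simp
    qed
    then show "((\<lambda>m::nat. c i / real (2*m) ^ (p+q-i)) has_sum v i) {1..}" "v i \<in> zeta_algebra" by auto
  qed
  have "((\<lambda>m::nat. \<Sum>i\<le>p+q. c i / real (2*m) ^ (p+q-i)) has_sum (\<Sum>i\<le>p+q. v i)) {1..}"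
    by (rule has_sum_sum_fin) (simp, rule hs)
  moreover have "((\<lambda>m::nat. \<Sum>i\<le>p+q. c i / real (2*m) ^ (p+q-i)) has_sum (\<Sum>i\<le>p+q. v i)) {1..} =
       ((\<lambda>m. T (2*m) p q) has_sum (\<Sum>i\<le>p+q. v i)) {1..}"
    by (rule has_sum_cong) (use c(3) in auto)
  ultimately show ?thesis using vz by (intro exI[of _ "\<Sum>i\<le>p+q. v i"]) (auto intro: ZA_sum)
qed

theorem corollary6p5:
  fixes p q :: nat
  assumes "p \<ge> 2" and "q \<ge> 2" and "odd (p + q)"
  shows "zeta2sharp p q \<in> zeta_algebra"
proof -
  obtain v where v: "v \<in> zeta_algebra" "((\<lambda>m. T (2*m) p q) has_sum v) {1..}" using U_ZA assms by blast
  have U: "v = zeta2sharp p q + (-1)^p * Pval p q + - zeta2sharp q p"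
    using has_sum_unique[OF v(2) U_value[OF assms]] .
  have P: "Pval p q = zeta2sharp p q + zeta2sharp q p + rzeta (p+q)"
    using zsharp_has_sum(4)[OF assms(1,2)] .
  have e: "zeta2sharp p q = (Pval p q - rzeta (p+q) + v - (-1)^p * Pval p q) / 2"
    using U P by simp
  have m: "(Pval p q - rzeta (p+q) + v - (-1)^p * Pval p q) / 2 \<in> zeta_algebra"
    using assms v(1)
    by (intro ZA_half ZA_diff zeta_algebra.add zeta_algebra.mult Pval_ZA ZA_zeta ZA_sign) auto
  show ?thesis by (subst e) (rule m)
qed

end
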